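(* Let $\mathcal H$ be a complex Hilbert space, $A, B$ bounded self-adjoint operators on $\mathcal H$ and $C$ a bounded operator on $\mathcal H$. Let $M$ be a closed subspace of $\mathcal H$ invariant for $A$, $B$ and $C$, such that $\sigma(A|_{M^\perp}) \cap \sigma(B|_M) = \emptyset$ and $B|_M$ is a compact operator on $M$. If $D$ is a bounded operator on $\mathcal H$ with $AD - DB = C$, then $M$ is invariant for $D$.
   Context: $\sigma(\cdot)$ denotes the spectrum and $M^\perp$ the orthogonal complement of $M$. *)

theory Defs
  imports "HOL-Analysis.Analysis"
begin

text \<open>The distribution has no complex inner product spaces, so we introduce them here.
  Convention: the inner product is conjugate-linear in the first and linear in the second
  argument.\<close>

class complex_vector = real_vector +
  fixes scaleC :: "complex \<Rightarrow> 'a \<Rightarrow> 'a" (infixr \<open>*\<^sub>C\<close> 75)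
  assumes scaleC_add_right: "scaleC a (x + y) = scaleC a x + scaleC a y"
    and scaleC_add_left: "scaleC (a + b) x = scaleC a x + scaleC b x"
    and scaleC_scaleC: "scaleC a (scaleC b x) = scaleC (a * b) x"
    and scaleC_one: "scaleC 1 x = x"
    and scaleR_scaleC: "scaleR r x = scaleC (complex_of_real r) x"

class complex_inner = complex_vector + real_normed_vector +
  fixes cinner :: "'a \<Rightarrow> 'a \<Rightarrow> complex"
  assumes cinner_commute: "cinner x y = cnj (cinner y x)"
    and cinner_add_left: "cinner (x + y) z = cinner x z + cinner y z"
    and cinner_scaleC_left: "cinner (scaleC r x) y = cnj r * cinner x y"
    and cinner_self_real: "Im (cinner x x) = 0"
    and cinner_self_nonneg: "0 \<le> Re (cinner x x)"
    and cinner_self_eq_zero: "cinner x x = 0 \<longleftrightarrow> x = 0"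
    and norm_eq_sqrt_cinner: "norm x = sqrt (Re (cinner x x))"

class chilbert_space = complex_inner + complete_space

instantiation complex :: complex_vector
begin
definition scaleC_complex :: "complex \<Rightarrow> complex \<Rightarrow> complex" where
  "scaleC_complex a x = a * x"
instance
  by standard (simp_all add: scaleC_complex_def algebra_simps scaleR_conv_of_real)
end

instantiation complex :: complex_inner
begin
definition cinner_complex :: "complex \<Rightarrow> complex \<Rightarrow> complex" where
  "cinner_complex x y = cnj x * y"
instance
proof
  fix x y z :: complex and r :: complex
  show "cinner x y = cnj (cinner y x)" by (simp add: cinner_complex_def mult.commute)
  show "cinner (x + y) z = cinner x z + cinner y z" by (simp add: cinner_complex_def algebra_simps)
  show "cinner (r *\<^sub>C x) y = cnj r * cinner x y" by (simp add: cinner_complex_def scaleC_complex_def)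
  show "Im (cinner x x) = 0" by (simp add: cinner_complex_def)
  show "0 \<le> Re (cinner x x)" by (simp add: cinner_complex_def)
  show "cinner x x = 0 \<longleftrightarrow> x = 0" by (simp add: cinner_complex_def)
  show "norm x = sqrt (Re (cinner x x))" by (simp add: cinner_complex_def cmod_def power2_eq_square)
qed
end

instance complex :: chilbert_space ..

definition bounded_clinear :: "('a::complex_inner \<Rightarrow> 'b::complex_inner) \<Rightarrow> bool" where
  "bounded_clinear T \<longleftrightarrow> bounded_linear T \<and> (\<forall>c x. T (c *\<^sub>C x) = c *\<^sub>C T x)"

definition selfadjoint :: "('a::complex_inner \<Rightarrow> 'a) \<Rightarrow> bool" where
  "selfadjoint T \<longleftrightarrow> (\<forall>x y. cinner (T x) y = cinner x (T y))"

definition closed_csubspace :: "'a::complex_inner set \<Rightarrow> bool" where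
  "closed_csubspace M \<longleftrightarrow> 0 \<in> M \<and> (\<forall>x\<in>M. \<forall>y\<in>M. x + y \<in> M)
     \<and> (\<forall>c. \<forall>x\<in>M. c *\<^sub>C x \<in> M) \<and> closed M"

definition invariant :: "'a set \<Rightarrow> ('a \<Rightarrow> 'a) \<Rightarrow> bool" where
  "invariant M T \<longleftrightarrow> T ` M \<subseteq> M"

definition orth :: "'a::complex_inner set \<Rightarrow> 'a set" where
  "orth M = {y. \<forall>x\<in>M. cinner x y = 0}"

definition invertible_on :: "'a::complex_inner set \<Rightarrow> ('a \<Rightarrow> 'a) \<Rightarrow> bool" where
  "invertible_on S T \<longleftrightarrow> (\<exists>R. (\<forall>x\<in>S. R x \<in> S \<and> R (T x) = x \<and> T (R x) = x)
       \<and> (\<exists>K. \<forall>x\<in>S. norm (R x) \<le> K * norm x))"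

definition spectrum_on :: "'a::complex_inner set \<Rightarrow> ('a \<Rightarrow> 'a) \<Rightarrow> complex set" where
  "spectrum_on S T = {l. \<not> invertible_on S (\<lambda>x. T x - l *\<^sub>C x)}"

definition compact_on :: "'a::complex_inner set \<Rightarrow> ('a \<Rightarrow> 'a) \<Rightarrow> bool" where
  "compact_on S T \<longleftrightarrow> compact (closure (T ` (S \<inter> cball 0 1)))"

end

theory Submission
  imports Defs
begin

lemma cinner_add_right: "cinner x (y + z) = cinner x y + cinner (x::'a::complex_inner) z"
  by (metis cinner_commute cinner_add_left complex_cnj_add)

lemma cinner_scaleC_right: "cinner x (c *\<^sub>C y) = c * cinner (x::'a::complex_inner) y"
  by (metis cinner_commute cinner_scaleC_left complex_cnj_cnj complex_cnj_mult)

lemma cinner_zero_left [simp]: "cinner 0 (y::'a::complex_inner) = 0"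
  using cinner_add_left[of 0 0 y] by simp

lemma cinner_zero_right [simp]: "cinner (y::'a::complex_inner) 0 = 0"
  using cinner_add_right[of y 0 0] by simp

lemma cinner_diff_left: "cinner (x - y) z = cinner x z - cinner (y::'a::complex_inner) z"
  using cinner_add_left[of "x - y" y z] by simp

lemma cinner_diff_right: "cinner z (x - y) = cinner z x - cinner (z::'a::complex_inner) y"
  using cinner_add_right[of z "x - y" y] by simp

lemma cinner_scaleR_left: "cinner (r *\<^sub>R x) y = of_real r * cinner (x::'a::complex_inner) y"
  by (simp add: scaleR_scaleC cinner_scaleC_left)

lemma cinner_scaleR_right: "cinner y (r *\<^sub>R x) = of_real r * cinner (y::'a::complex_inner) x"
  by (simp add: scaleR_scaleC cinner_scaleC_right)

lemma norm_sq_cinner: "(norm x)^2 = Re (cinner x (x::'a::complex_inner))"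
  by (simp add: norm_eq_sqrt_cinner cinner_self_nonneg)

lemma Re_cinner_sym: "Re (cinner x y) = Re (cinner y (x::'a::complex_inner))"
  by (subst cinner_commute) simp

lemma norm_add_sq: "(norm (x + y))^2 = (norm x)^2 + 2 * Re (cinner x y) + (norm (y::'a::complex_inner))^2"
  unfolding norm_sq_cinner
  by (simp add: cinner_add_left cinner_add_right Re_cinner_sym[of y x])

lemma norm_diff_sq: "(norm (x - y))^2 = (norm x)^2 - 2 * Re (cinner x y) + (norm (y::'a::complex_inner))^2"
  unfolding norm_sq_cinner
  by (simp add: cinner_diff_left cinner_diff_right Re_cinner_sym[of y x])

lemma scaleC_zero_right [simp]: "c *\<^sub>C (0::'a::complex_vector) = 0"
  using scaleC_add_right[of c 0 0] by simp

lemma scaleC_zero_left [simp]: "0 *\<^sub>C (x::'a::complex_vector) = 0"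
  using scaleC_add_left[of 0 0 x] by simp

lemma scaleC_minus_one: "(-1) *\<^sub>C (x::'a::complex_vector) = - x"
  using scaleR_scaleC[of "-1" x] by simp

lemma scaleC_diff_right: "c *\<^sub>C (x - y) = c *\<^sub>C x - c *\<^sub>C (y::'a::complex_vector)"
  using scaleC_add_right[of c "x - y" y] by (simp add: algebra_simps)

lemma cinner_self_zero: "cinner x x = 0 \<Longrightarrow> (x::'a::complex_inner) = 0"
  using cinner_self_eq_zero by blast

lemma cinner_ii: "Re (cinner (\<i> *\<^sub>C x) y) = Im (cinner (x::'a::complex_inner) y)"
  by (simp add: cinner_scaleC_left)

lemma cinner_polar: "cinner x y = Complex ((norm (x + y)^2 - norm (x - y)^2)/4)
     ((norm (\<i> *\<^sub>C x + y)^2 - norm (\<i> *\<^sub>C x - y)^2)/4)"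
  by (simp add: norm_add_sq norm_diff_sq cinner_ii complex_eq_iff)

lemma cinner_cont: "continuous (at y) (\<lambda>y. cinner (x::'a::complex_inner) y)"
proof -
  have "continuous (at y) (\<lambda>y. Complex ((norm (x + y)^2 - norm (x - y)^2)/4)
     ((norm (\<i> *\<^sub>C x + y)^2 - norm (\<i> *\<^sub>C x - y)^2)/4))"
    by (simp add: Complex_eq continuous_intros)
  then show ?thesis using cinner_polar[of x] by simp
qed

lemma subspace_diff: "closed_csubspace M \<Longrightarrow> x \<in> M \<Longrightarrow> y \<in> M \<Longrightarrow> x - y \<in> M"
  unfolding closed_csubspace_def
  by (metis diff_conv_add_uminus scaleC_minus_one)

lemma subspace_scaleR: "closed_csubspace M \<Longrightarrow> x \<in> M \<Longrightarrow> r *\<^sub>R x \<in> M"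
  unfolding closed_csubspace_def by (simp add: scaleR_scaleC)

lemma orth_subspace: "closed_csubspace (orth (M::'a::complex_inner set))"
proof -
  have "orth M = (\<Inter>x\<in>M. (\<lambda>y. cinner x y) -` {0})" unfolding orth_def by auto
  moreover have "closed (\<Inter>x\<in>M. (\<lambda>y. cinner x y) -` {0})"
    by (intro closed_INT ballI continuous_closed_vimage cinner_cont) simp
  ultimately show ?thesis unfolding closed_csubspace_def orth_def
    by (auto simp: cinner_add_right cinner_scaleC_right)
qed

lemma orth_inter: "x \<in> M \<Longrightarrow> x \<in> orth M \<Longrightarrow> x = 0"
  unfolding orth_def using cinner_self_zero by blast

lemma not_inv_on: "invertible_on S T \<Longrightarrow> y \<in> S \<Longrightarrow> 0 \<in> S \<Longrightarrow> T y = 0 \<Longrightarrow> T 0 = 0 \<Longrightarrow> y = 0"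
  unfolding invertible_on_def by metis

lemma quad_zero:
  fixes a b :: real
  assumes "b \<ge> 0" "\<And>t. 0 \<le> - 2 * t * a + t^2 * b"
  shows "a = 0"
proof -
  define t where "t = a/(b+1)"
  have a: "a = t * (b+1)" unfolding t_def using assms(1) by simp
  have "- 2 * t * a + t^2 * b = t^2 * (- b - 2)" unfolding a by (simp add: algebra_simps power2_eq_square)
  then have "0 \<le> t^2 * (- b - 2)" using assms(2)[of t] by simp
  moreover have "- b - 2 < 0" using assms(1) by simp
  ultimately have "t^2 \<le> 0" by (simp add: zero_le_mult_iff)
  then have "t = 0" by simp
  then show ?thesis using a by simp
qed


lemma parallelogram: "(norm (a - b))^2 = 2 * (norm a)^2 + 2 * (norm (b::'a::complex_inner))^2
   - 4 * (norm ((1/2) *\<^sub>R (a + b)))^2"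
proof -
  have "(norm ((1/2) *\<^sub>R (a + b)))^2 = (1/4) * (norm (a + b))^2"
    by (simp add: power_mult_distrib power2_eq_square)
  then show ?thesis by (simp add: norm_add_sq norm_diff_sq)
qed

lemma proj_exists:
  fixes S :: "'a::chilbert_space set"
  assumes S: "closed_csubspace S"
  shows "\<exists>p\<in>S. x - p \<in> orth S"
proof -
  have S0: "0 \<in> S" and Sadd: "\<And>u v. u \<in> S \<Longrightarrow> v \<in> S \<Longrightarrow> u + v \<in> S"
    and SC: "\<And>c u. u \<in> S \<Longrightarrow> c *\<^sub>C u \<in> S" and Scl: "closed S"
    using S unfolding closed_csubspace_def by auto
  define N where "N = (\<lambda>s. (norm (x - s))^2) ` S"
  define d where "d = Inf N"
  have Nne: "N \<noteq> {}" using S0 N_def by auto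
  have Nbdd: "bdd_below N" unfolding N_def by (rule bdd_belowI[of _ 0]) auto
  have dle: "\<And>s. s \<in> S \<Longrightarrow> d \<le> (norm (x - s))^2"
    unfolding d_def N_def by (rule cInf_lower) (use Nbdd N_def in auto)
  have "\<forall>n. \<exists>s\<in>S. (norm (x - s))^2 < d + inverse (real (Suc n))"
  proof
    fix n
    have "Inf N < d + inverse (real (Suc n))" unfolding d_def by simp
    then show "\<exists>s\<in>S. (norm (x - s))^2 < d + inverse (real (Suc n))"
      using cInf_less_iff[OF Nne Nbdd] unfolding N_def by auto
  qed
  then obtain s where sS: "\<And>n. s n \<in> S"
    and sl: "\<And>n. (norm (x - s n))^2 < d + inverse (real (Suc n))" by metis
  have key: "(norm (s m - s n))^2 \<le> 2 * inverse (real (Suc m)) + 2 * inverse (real (Suc n))" for m n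
  proof -
    have "(norm ((x - s m) - (x - s n)))^2 = 2 * (norm (x - s m))^2 + 2 * (norm (x - s n))^2
      - 4 * (norm ((1/2) *\<^sub>R ((x - s m) + (x - s n))))^2" by (rule parallelogram)
    moreover have "(1/2) *\<^sub>R ((x - s m) + (x - s n)) = x - (1/2) *\<^sub>R (s m + s n)"
      by (simp add: algebra_simps flip: scaleR_add_left)
    moreover have "(1/2) *\<^sub>R (s m + s n) \<in> S" using subspace_scaleR[OF S] Sadd sS by blast
    ultimately have "(norm (s n - s m))^2 \<le> 2 * (norm (x - s m))^2 + 2 * (norm (x - s n))^2 - 4 * d"
      using dle by fastforce
    then show ?thesis using sl[of m] sl[of n] by (simp add: norm_minus_commute)
  qed
  have "Cauchy s"
  proof (rule metric_CauchyI)
    fix e :: real assume e: "e > 0"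
    obtain N0 where N0: "inverse (real (Suc N0)) < e^2 / 4"
      using reals_Archimedean e by (metis divide_pos_pos zero_less_numeral zero_less_power)
    have "dist (s m) (s n) < e" if "m \<ge> N0" "n \<ge> N0" for m n
    proof -
      have im: "inverse (real (Suc m)) \<le> inverse (real (Suc N0))" using that
        by (simp add: le_imp_inverse_le)
      have i_n: "inverse (real (Suc n)) \<le> inverse (real (Suc N0))" using that
        by (simp add: le_imp_inverse_le)
      have "(norm (s m - s n))^2 < e^2" using key[of m n] im i_n N0 by linarith
      then have "norm (s m - s n) < e" using e by (simp add: power_less_imp_less_base)
      then show ?thesis by (simp add: dist_norm)
    qed
    then show "\<exists>M. \<forall>m\<ge>M. \<forall>n\<ge>M. dist (s m) (s n) < e" by blast
  qed
  then obtain p where sp: "s \<longlonglongrightarrow> p" using Cauchy_convergent_iff convergent_def by blast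
  have pS: "p \<in> S" using Scl sS sp closed_sequentially by blast
  have lim1: "(\<lambda>n. (norm (x - s n))^2) \<longlonglongrightarrow> (norm (x - p))^2"
    by (intro tendsto_intros sp)
  have lim2: "(\<lambda>n. d + inverse (real (Suc n))) \<longlonglongrightarrow> d"
    using LIMSEQ_inverse_real_of_nat_add by simp
  have pd: "(norm (x - p))^2 \<le> d"
    using lim1 lim2 sl by (intro LIMSEQ_le[OF lim1 lim2]) (auto intro: less_imp_le)
  define z where "z = x - p"
  have re0: "Re (cinner u z) = 0" if uS: "u \<in> S" for u
  proof (rule quad_zero)
    show "0 \<le> (norm u)^2" by simp
    fix t :: real
    have "p + t *\<^sub>R u \<in> S" using Sadd pS subspace_scaleR[OF S uS] by blast
    then have "(norm z)^2 \<le> (norm (z - t *\<^sub>R u))^2"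
      using dle pd unfolding z_def by (metis diff_diff_eq order_trans)
    also have "\<dots> = (norm z)^2 - 2 * t * Re (cinner u z) + t^2 * (norm u)^2"
      by (simp add: norm_diff_sq cinner_scaleR_right Re_cinner_sym[of z u] power_mult_distrib)
    finally show "0 \<le> - 2 * t * Re (cinner u z) + t^2 * (norm u)^2" by simp
  qed
  have "z \<in> orth S"
    unfolding orth_def
  proof
    show "\<forall>u\<in>S. cinner u z = 0"
    proof
      fix u assume uS: "u \<in> S"
      have "Re (cinner u z) = 0" using re0 uS .
      moreover have "Im (cinner u z) = 0" using re0[OF SC[OF uS, of \<i>]] cinner_ii[of u z] by metis
      ultimately show "cinner u z = 0" by (simp add: complex_eq_iff)
    qed
  qed
  then show ?thesis using pS z_def by blast
qed


lemma eigen_exists: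
  fixes B :: "'a::chilbert_space \<Rightarrow> 'a" and S T :: "'a set"
  assumes BL: "bounded_linear B" and sa: "\<And>x y. cinner (B x) y = cinner x (B y)"
    and S: "closed_csubspace S" and inv: "\<And>x. x \<in> S \<Longrightarrow> B x \<in> S"
    and T: "compact T" and BU: "B ` (S \<inter> cball 0 1) \<subseteq> T"
    and v0: "v0 \<in> S" "v0 \<noteq> 0"
  shows "\<exists>v\<in>S. v \<noteq> 0 \<and> (\<exists>l. B v = l *\<^sub>C v)"
proof -
  interpret B: bounded_linear B by (rule BL)
  have S0: "0 \<in> S" and Sadd: "\<And>u v. u \<in> S \<Longrightarrow> v \<in> S \<Longrightarrow> u + v \<in> S"
    and Scl: "closed S"
    using S unfolding closed_csubspace_def by auto
  obtain c where c: "c > 0" "\<And>x. norm (B x) \<le> norm x * c" using B.pos_bounded by blast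
  define U where "U = S \<inter> cball 0 1"
  define N where "N = (\<lambda>x. norm (B x)) ` U"
  define s where "s = Sup N"
  have Nne: "N \<noteq> {}" using S0 unfolding N_def U_def by auto
  have Nbdd: "bdd_above N" unfolding N_def U_def
    by (rule bdd_aboveI[of _ c]) (use c in \<open>auto intro: order_trans[OF c(2)] mult_left_le_one_le\<close>)
  have Nle: "\<And>x. x \<in> U \<Longrightarrow> norm (B x) \<le> s"
    unfolding s_def N_def by (rule cSup_upper) (use Nbdd N_def in auto)
  have bnd: "norm (B y) \<le> s * norm y" if yS: "y \<in> S" for y
  proof (cases "y = 0")
    case True then show ?thesis by simp
  next
    case False
    have "(1 / norm y) *\<^sub>R y \<in> U" unfolding U_def using subspace_scaleR[OF S yS] False by simp
    then have "norm (B ((1 / norm y) *\<^sub>R y)) \<le> s" by (rule Nle)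
    then have "norm (B y) / norm y \<le> s" by (simp add: B.scaleR)
    then show ?thesis using False by (simp add: divide_le_eq mult.commute)
  qed
  have s0: "s \<ge> 0" using Nle[of 0] S0 unfolding U_def by simp
  show ?thesis
  proof (cases "s = 0")
    case True
    then have "B v0 = 0" using bnd[OF v0(1)] by simp
    then show ?thesis using v0 scaleC_zero_left[of v0] by (intro bexI[of _ v0]) metis+
  next
    case False
    then have sp: "s > 0" using s0 by simp
    have "\<forall>n. \<exists>x\<in>U. s - inverse (real (Suc n)) < norm (B x)"
    proof
      fix n
      have "s - inverse (real (Suc n)) < Sup N" unfolding s_def by simp
      then show "\<exists>x\<in>U. s - inverse (real (Suc n)) < norm (B x)"
        using less_cSup_iff[OF Nne Nbdd] unfolding N_def by auto
    qed
    then obtain xs where xU: "\<And>n. xs n \<in> U"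
      and xl: "\<And>n. s - inverse (real (Suc n)) < norm (B (xs n))" by metis
    have xS: "\<And>n. xs n \<in> S" and x1: "\<And>n. norm (xs n) \<le> 1" using xU unfolding U_def by auto
    have limB: "(\<lambda>n. norm (B (xs n))) \<longlonglongrightarrow> s"
    proof (rule tendsto_sandwich[of "\<lambda>n. s + - inverse (real (Suc n))" _ _ "\<lambda>n. s"])
      show "\<forall>\<^sub>F n in sequentially. s + - inverse (real (Suc n)) \<le> norm (B (xs n))"
        using xl by (intro always_eventually allI) (simp add: less_imp_le)
      show "\<forall>\<^sub>F n in sequentially. norm (B (xs n)) \<le> s" using Nle xU by (intro always_eventually allI) simp
      show "(\<lambda>n. s + - inverse (real (Suc n))) \<longlonglongrightarrow> s" by (rule LIMSEQ_inverse_real_of_nat_add_minus)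
    qed simp
    define w where "w n = B (B (xs n)) - (s^2) *\<^sub>R xs n" for n
    have west: "(norm (w n))^2 \<le> 2 * s^4 - 2 * s^2 * (norm (B (xs n)))^2" for n
    proof -
      have a: "norm (B (B (xs n))) \<le> s^2"
      proof -
        have "norm (B (B (xs n))) \<le> s * norm (B (xs n))" using bnd inv xS by blast
        also have "\<dots> \<le> s * (s * norm (xs n))" using bnd[OF xS[of n]] s0 by (simp add: mult_left_mono)
        also have "\<dots> \<le> s * s" using x1[of n] s0 mult_left_le[of "norm (xs n)" "s * s"] by (simp add: mult.assoc)
        finally show ?thesis by (simp add: power2_eq_square)
      qed
      have a2: "(norm (B (B (xs n))))^2 \<le> s^4"
        using power_mono[OF a, of 2] by (simp add: power_mult[symmetric])
      have b: "(norm ((s^2) *\<^sub>R xs n))^2 \<le> s^4"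
      proof -
        have "(norm (xs n))^2 \<le> 1" using x1[of n] by (simp add: power_le_one)
        then have "s^4 * (norm (xs n))^2 \<le> s^4" by (simp add: mult_left_le)
        then show ?thesis by (simp add: power_mult_distrib power_mult[symmetric])
      qed
      have c: "Re (cinner (B (B (xs n))) ((s^2) *\<^sub>R xs n)) = s^2 * (norm (B (xs n)))^2"
        by (simp add: cinner_scaleR_right sa norm_sq_cinner)
      show ?thesis unfolding w_def norm_diff_sq c using a2 b by simp
    qed
    have wlim: "w \<longlonglongrightarrow> 0"
    proof -
      have "(\<lambda>n. (norm (w n))^2) \<longlonglongrightarrow> 0"
      proof (rule tendsto_sandwich[of "\<lambda>n. 0" _ _ "\<lambda>n. 2 * s^4 - 2 * s^2 * (norm (B (xs n)))^2"])
        show "\<forall>\<^sub>F n in sequentially. 0 \<le> (norm (w n))^2" by simp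
        show "\<forall>\<^sub>F n in sequentially. (norm (w n))^2 \<le> 2 * s^4 - 2 * s^2 * (norm (B (xs n)))^2"
          using west by (intro always_eventually allI) simp
        have "(\<lambda>n. 2 * s^4 - 2 * s^2 * (norm (B (xs n)))^2) \<longlonglongrightarrow> 2 * s^4 - 2 * s^2 * s^2"
          by (intro tendsto_intros limB)
        then show "(\<lambda>n. 2 * s^4 - 2 * s^2 * (norm (B (xs n)))^2) \<longlonglongrightarrow> 0"
        proof -
          have z: "2 * s^4 - 2 * s^2 * s^2 = (0::real)" by (simp add: power4_eq_xxxx power2_eq_square)
          show ?thesis using \<open>(\<lambda>n. 2 * s^4 - 2 * s^2 * (norm (B (xs n)))^2) \<longlonglongrightarrow> 2 * s^4 - 2 * s^2 * s^2\<close>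
            unfolding z .
        qed
      qed simp
      then have "(\<lambda>n. sqrt ((norm (w n))^2)) \<longlonglongrightarrow> sqrt 0" by (rule tendsto_real_sqrt)
      then have "(\<lambda>n. norm (w n)) \<longlonglongrightarrow> 0" by simp
      then show ?thesis by (simp add: tendsto_norm_zero_iff)
    qed
    have ST: "seq_compact T" using T by (rule compact_imp_seq_compact)
    have BT: "\<forall>n. B (xs n) \<in> T" using BU xU unfolding U_def by blast
    obtain y r where "y \<in> T" and r: "strict_mono r" and yl0: "((\<lambda>n. B (xs n)) \<circ> r) \<longlonglongrightarrow> y"
      by (rule seq_compactE[OF ST BT])
    have yl: "(\<lambda>n. B (xs (r n))) \<longlonglongrightarrow> y" using yl0 by (simp add: o_def)
    have l1: "(\<lambda>n. B (B (xs (r n)))) \<longlonglongrightarrow> B y" by (rule B.tendsto[OF yl])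
    have l2: "(\<lambda>n. w (r n)) \<longlonglongrightarrow> 0" using LIMSEQ_subseq_LIMSEQ[OF wlim r] by (simp add: o_def)
    define v where "v = (1 / s^2) *\<^sub>R B y"
    have "(\<lambda>n. (1 / s^2) *\<^sub>R (B (B (xs (r n))) - w (r n))) \<longlonglongrightarrow> (1 / s^2) *\<^sub>R (B y - 0)"
      using l1 l2 by (intro tendsto_scaleR tendsto_const tendsto_diff)
    moreover have "(1 / s^2) *\<^sub>R (B (B (xs (r n))) - w (r n)) = xs (r n)" for n
      using sp by (simp add: w_def)
    ultimately have xv: "(\<lambda>n. xs (r n)) \<longlonglongrightarrow> v" unfolding v_def by simp
    have vS: "v \<in> S" using closed_sequentially[OF Scl _ xv] xS by blast
    have "(\<lambda>n. B (xs (r n))) \<longlonglongrightarrow> B v" by (rule B.tendsto[OF xv])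
    then have Bv: "B v = y" using yl by (rule LIMSEQ_unique)
    have sv: "(s^2) *\<^sub>R v = B y" unfolding v_def using sp by simp
    have BBv: "B (B v) = (s^2) *\<^sub>R v" using sv Bv by simp
    have "(\<lambda>n. norm (B (xs (r n)))) \<longlonglongrightarrow> s"
      using LIMSEQ_subseq_LIMSEQ[OF limB r] by (simp add: o_def)
    moreover have "(\<lambda>n. norm (B (xs (r n)))) \<longlonglongrightarrow> norm y" using yl by (rule tendsto_norm)
    ultimately have "norm y = s" by (rule LIMSEQ_unique[symmetric])
    then have vne: "v \<noteq> 0" using Bv sp by auto
    define u where "u = B v + s *\<^sub>R v"
    show ?thesis
    proof (cases "u = 0")
      case True
      then have "B v = - (s *\<^sub>R v)" unfolding u_def by (simp add: eq_neg_iff_add_eq_0)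
      then have "B v = complex_of_real (- s) *\<^sub>C v" using scaleR_scaleC[of "- s" v] by simp
      then show ?thesis using vS vne by blast
    next
      case False
      have uS: "u \<in> S" unfolding u_def using Sadd inv vS subspace_scaleR[OF S vS] by blast
      have "B u = s *\<^sub>R u" unfolding u_def
        by (simp add: B.add B.scaleR BBv scaleR_add_right power2_eq_square)
      then have "B u = complex_of_real s *\<^sub>C u" by (simp add: scaleR_scaleC)
      then show ?thesis using uS False by blast
    qed
  qed
qed


theorem lemma2p2:
  fixes A B C D :: "'a::chilbert_space \<Rightarrow> 'a" and M :: "'a set"
  assumes "bounded_clinear A" and "bounded_clinear B" and "bounded_clinear C"
    and "selfadjoint A" and "selfadjoint B"
    and "closed_csubspace M"
    and "invariant M A" and "invariant M B" and "invariant M C"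
    and "spectrum_on (orth M) A \<inter> spectrum_on M B = {}"
    and "compact_on M B"
    and "bounded_clinear D"
    and "\<And>x. A (D x) - D (B x) = C x"
  shows "invariant M D"
proof -
  note M = assms(6)
  have AL: "bounded_linear A" and BL: "bounded_linear B" and DL: "bounded_linear D"
    using assms(1,2,12) unfolding bounded_clinear_def by auto
  have AC: "\<And>c x. A (c *\<^sub>C x) = c *\<^sub>C A x" and DC: "\<And>c x. D (c *\<^sub>C x) = c *\<^sub>C D x"
    using assms(1,12) unfolding bounded_clinear_def by auto
  interpret A: bounded_linear A by (rule AL)
  interpret B: bounded_linear B by (rule BL)
  interpret D: bounded_linear D by (rule DL)
  have saA: "\<And>x y. cinner (A x) y = cinner x (A y)" and saB: "\<And>x y. cinner (B x) y = cinner x (B y)"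
    using assms(4,5) unfolding selfadjoint_def by auto
  have M0: "0 \<in> M" and Madd: "\<And>u v. u \<in> M \<Longrightarrow> v \<in> M \<Longrightarrow> u + v \<in> M"
    and MC: "\<And>c u. u \<in> M \<Longrightarrow> c *\<^sub>C u \<in> M" and Mcl: "closed M"
    using M unfolding closed_csubspace_def by auto
  have AM: "\<And>x. x \<in> M \<Longrightarrow> A x \<in> M" and BM: "\<And>x. x \<in> M \<Longrightarrow> B x \<in> M"
    and CM: "\<And>x. x \<in> M \<Longrightarrow> C x \<in> M"
    using assms(7,8,9) unfolding invariant_def by auto
  define K where "K = {x \<in> M. D x \<in> M}"
  have KM: "K \<subseteq> M" unfolding K_def by auto
  have K: "closed_csubspace K"
  proof -
    have "K = M \<inter> D -` M" unfolding K_def by auto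
    moreover have "closed (D -` M)"
      by (rule continuous_closed_vimage[OF Mcl]) (simp add: D.continuous_on continuous_on_eq_continuous_at[symmetric] linear_continuous_at DL)
    ultimately have "closed K" using Mcl by auto
    then show ?thesis unfolding closed_csubspace_def K_def
      using M0 Madd MC by (auto simp: D.add DC)
  qed
  have BK: "\<And>x. x \<in> K \<Longrightarrow> B x \<in> K"
  proof -
    fix x assume xK: "x \<in> K"
    then have xM: "x \<in> M" and DxM: "D x \<in> M" unfolding K_def by auto
    have "D (B x) = A (D x) - C x" using assms(13)[of x] by (simp add: algebra_simps)
    then have "D (B x) \<in> M" using subspace_diff[OF M AM[OF DxM] CM[OF xM]] by simp
    then show "B x \<in> K" using BM[OF xM] unfolding K_def by auto
  qed
  define K' where "K' = M \<inter> orth K"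
  have K': "closed_csubspace K'"
    using M orth_subspace[of K] unfolding K'_def closed_csubspace_def by auto
  have BK': "\<And>x. x \<in> K' \<Longrightarrow> B x \<in> K'"
  proof -
    fix x assume "x \<in> K'"
    then have xM: "x \<in> M" and xo: "x \<in> orth K" unfolding K'_def by auto
    have "B x \<in> orth K" unfolding orth_def
    proof
      show "\<forall>k\<in>K. cinner k (B x) = 0"
        using xo BK unfolding orth_def by (simp add: saB[symmetric])
    qed
    then show "B x \<in> K'" using BM[OF xM] unfolding K'_def by auto
  qed
  have Kz: "K' \<subseteq> {0}"
  proof (rule ccontr)
    assume "\<not> K' \<subseteq> {0}"
    then obtain v0 where v0: "v0 \<in> K'" "v0 \<noteq> 0" by auto
    have cpt: "compact (closure (B ` (M \<inter> cball 0 1)))" using assms(11) unfolding compact_on_def .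
    have "K' \<inter> cball 0 1 \<subseteq> M \<inter> cball 0 1" unfolding K'_def by auto
    then have "B ` (K' \<inter> cball 0 1) \<subseteq> B ` (M \<inter> cball 0 1)" by (rule image_mono)
    then have sub: "B ` (K' \<inter> cball 0 1) \<subseteq> closure (B ` (M \<inter> cball 0 1))"
      using closure_subset by (rule order_trans)
    obtain v l where vK': "v \<in> K'" and vne: "v \<noteq> 0" and Bv: "B v = l *\<^sub>C v"
      using eigen_exists[where B=B and S=K', OF BL saB K' BK' cpt sub v0(1) v0(2)] by blast
    have vM: "v \<in> M" and vo: "v \<in> orth K" using vK' unfolding K'_def by auto
    have "l \<in> spectrum_on M B"
      unfolding spectrum_on_def mem_Collect_eq
    proof
      assume inv: "invertible_on M (\<lambda>x. B x - l *\<^sub>C x)"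
      have "v = 0" by (rule not_inv_on[OF inv vM M0]) (simp_all add: Bv)
      then show False using vne by simp
    qed
    then have "l \<notin> spectrum_on (orth M) A" using assms(10) by auto
    then have invA: "invertible_on (orth M) (\<lambda>x. A x - l *\<^sub>C x)" unfolding spectrum_on_def by simp
    obtain p where pM: "p \<in> M" and yo: "D v - p \<in> orth M" using proj_exists[OF M] by blast
    define y where "y = D v - p"
    have yo': "y \<in> orth M" using yo y_def by simp
    have Ayo: "A y \<in> orth M" using yo' AM unfolding orth_def by (simp add: saA[symmetric])
    have OC: "\<And>c u. u \<in> orth M \<Longrightarrow> c *\<^sub>C u \<in> orth M" and O0: "0 \<in> orth M"
      using orth_subspace[of M] unfolding closed_csubspace_def by simp_all
    have lyo: "l *\<^sub>C y \<in> orth M" using OC[OF yo'] .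
    have Ty_o: "A y - l *\<^sub>C y \<in> orth M"
      using subspace_diff[OF orth_subspace Ayo lyo] .
    have "C v = A (D v) - D (B v)" using assms(13)[of v] by simp
    also have "\<dots> = A p + A y - l *\<^sub>C p - l *\<^sub>C y"
      unfolding Bv DC y_def by (simp add: A.diff scaleC_diff_right)
    finally have "A y - l *\<^sub>C y = C v - A p + l *\<^sub>C p" by (simp add: algebra_simps)
    moreover have "C v - A p + l *\<^sub>C p \<in> M"
      using Madd[OF subspace_diff[OF M CM[OF vM] AM[OF pM]] MC[OF pM]] .
    ultimately have "A y - l *\<^sub>C y \<in> M" by simp
    then have Ty0: "A y - l *\<^sub>C y = 0" using orth_inter Ty_o by blast
    have "y = 0" by (rule not_inv_on[OF invA yo' O0 Ty0]) simp
    then have "D v \<in> M" using pM y_def by simp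
    then have "v \<in> K" using vM unfolding K_def by simp
    then have "v = 0" using vo orth_inter by blast
    then show False using vne by simp
  qed
  show ?thesis unfolding invariant_def
  proof
    fix z assume "z \<in> D ` M"
    then obtain x where xM: "x \<in> M" and zx: "z = D x" by auto
    obtain k where kK: "k \<in> K" and xo: "x - k \<in> orth K" using proj_exists[OF K] by blast
    have "x - k \<in> M" using subspace_diff[OF M xM] kK KM by blast
    then have "x - k \<in> K'" using xo unfolding K'_def by simp
    then have "x = k" using Kz by auto
    then show "z \<in> M" using kK zx unfolding K_def by simp
  qed
qed

end
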